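(* Let $\Omega$ be a convex body contained in the unit ball whose volume is bounded below by a positive constant depending only on $d$, and let $f_0(x):=\|x\|^2$. There exist positive constants $c_1,c_2$ depending only on $d$ such that \[ \log N\big(c_1n^{-2/d}, \mathfrak{B}^{\mathcal{C}(\Omega)}_{\mathbb{P}_n}(f_0,t), \ell_{\mathbb{P}_n}\big)\ge\frac n8\quad\text{for all } t\ge c_2n^{-2/d}. \]
   Context: $\mathcal{S}=\delta\mathbb{Z}^d$; the points $X_1,\dots,X_n$ are an enumeration of $\mathcal{S}\cap\Omega$, $n=\#(\mathcal{S}\cap\Omega)$, with $\delta$ below a dimensional constant so that $2\le c_d\delta^{-d}\le n\le C_d\delta^{-d}$ for dimensional constants $c_d,C_d$. $\mathcal{C}(\Omega)$ is the class of convex functions on $\Omega$. $\ell_{\mathbb{P}_n}(f,g)=(\frac1n\sum_{i=1}^n(f(X_i)-g(X_i))^2)^{1/2}$ and $\mathfrak{B}^{\mathcal{F}}_{\mathbb{P}_n}(f,t)=\{g\in\mathcal{F}:\ell_{\mathbb{P}_n}(f,g)\le t\}$. $N(\varepsilon,A,\rho)$ denotes covering number. *)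

theory Defs
  imports "HOL-Analysis.Analysis" "HOL-Library.Extended_Nat" "HOL-Library.Extended_Real"
begin

definition scaled_lattice :: "real \<Rightarrow> (real^'d) set" where
  "scaled_lattice \<delta> = {x. \<forall>i. \<exists>k::int. x $ i = \<delta> * of_int k}"

text \<open>Empirical L2 pseudometric over the finite design set P (the points X_1..X_n).\<close>
definition ell_Pn :: "(real^'d) set \<Rightarrow> ((real^'d) \<Rightarrow> real) \<Rightarrow> ((real^'d) \<Rightarrow> real) \<Rightarrow> real" where
  "ell_Pn P f g = sqrt ((1 / real (card P)) * (\<Sum>x\<in>P. (f x - g x)^2))"

text \<open>Convex functions on \<Omega> (values outside \<Omega> are irrelevant).\<close>
definition convex_class :: "(real^'d) set \<Rightarrow> ((real^'d) \<Rightarrow> real) set" where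
  "convex_class \<Omega> = {f. convex_on \<Omega> f}"

definition emp_ball :: "('a \<Rightarrow> 'a \<Rightarrow> real) \<Rightarrow> 'a set \<Rightarrow> 'a \<Rightarrow> real \<Rightarrow> 'a set" where
  "emp_ball \<rho> F f t = {g \<in> F. \<rho> f g \<le> t}"

text \<open>Covering number: least number of \<rho>-balls of radius \<epsilon> (arbitrary centres) covering A;
  \<infinity> if no finite cover exists.\<close>
definition covering_number :: "real \<Rightarrow> 'a set \<Rightarrow> ('a \<Rightarrow> 'a \<Rightarrow> real) \<Rightarrow> enat" where
  "covering_number \<epsilon> A \<rho> =
     Inf {enat (card C) | C. finite C \<and> A \<subseteq> (\<Union>c\<in>C. {g. \<rho> c g \<le> \<epsilon>})}"

definition log_covering_number :: "real \<Rightarrow> 'a set \<Rightarrow> ('a \<Rightarrow> 'a \<Rightarrow> real) \<Rightarrow> ereal" where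
  "log_covering_number \<epsilon> A \<rho> =
     (case covering_number \<epsilon> A \<rho> of enat k \<Rightarrow> ereal (ln (real k)) | \<infinity> \<Rightarrow> \<infinity>)"

end

theory Submission
  imports Defs
begin


lemma strip_bound:
  fixes \<Omega> :: "(real^'d) set" and w :: "real^'d"
  assumes cpt: "compact \<Omega>" and cvx: "convex \<Omega>" and sub: "\<Omega> \<subseteq> cball 0 1" and nw: "norm w \<le> 1/2"
  shows "measure lebesgue {x\<in>\<Omega>. x + w \<notin> \<Omega>} \<le> 2 * norm w * measure lebesgue (cball (0::real^'d) 2)"
proof (cases "w = 0")
  case True then show ?thesis by simp
next
  case False
  define A where "A = {x\<in>\<Omega>. x + w \<notin> \<Omega>}"
  have A_eq: "A = \<Omega> - (\<lambda>y. y - w) ` \<Omega>"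
    unfolding A_def by (auto simp: image_iff) (metis add_diff_cancel)
  have Alm: "A \<in> lmeasurable"
    unfolding A_eq by (intro fmeasurable_Diff lmeasurable_compact cpt fmeasurableD compact_translation_subtract)
  have npos: "norm w > 0" using False by simp
  define y where "y = 1 / norm w"
  have y2: "y \<ge> 2" using nw npos by (simp add: y_def field_simps)
  define m where "m = nat \<lfloor>y\<rfloor>"
  have my: "real m \<le> y" using y2 by (simp add: m_def)
  have my2: "real m \<ge> y/2"
  proof -
    have "real (nat \<lfloor>y\<rfloor>) = of_int \<lfloor>y\<rfloor>" using y2 by simp
    moreover have "of_int \<lfloor>y\<rfloor> > y - 1" by linarith
    ultimately show ?thesis using y2 unfolding m_def by linarith
  qed
  define T where "T k = (+) (real k *\<^sub>R w) ` A" for k::nat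
  have Tlm: "T k \<in> lmeasurable" for k unfolding T_def by (rule measurable_translation[OF Alm])
  have Tmeas: "measure lebesgue (T k) = measure lebesgue A" for k
    unfolding T_def by (rule measure_translation)
  have helper: "T i \<inter> T j = {}" if ij: "i < j" for i j
  proof (rule ccontr)
    assume "T i \<inter> T j \<noteq> {}"
    then obtain a b where a: "a \<in> A" and b: "b \<in> A" and eq: "real i *\<^sub>R w + a = real j *\<^sub>R w + b"
      unfolding T_def by auto
    define k where "k = real j - real i"
    have k1: "k \<ge> 1" using ij by (simp add: k_def)
    have aeq: "a = b + k *\<^sub>R w" using eq by (simp add: k_def algebra_simps)
    have "(1 - 1/k) *\<^sub>R b + (1/k) *\<^sub>R a \<in> \<Omega>"
      using a b k1 unfolding A_def by (intro convexD[OF cvx]) auto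
    moreover have "(1 - 1/k) *\<^sub>R b + (1/k) *\<^sub>R a = b + w"
      using k1 by (simp add: aeq algebra_simps)
    ultimately show False using b unfolding A_def by auto
  qed
  have disj: "disjoint_family_on T {..<m}"
    unfolding disjoint_family_on_def
    by (metis helper inf_commute linorder_neqE_nat)
  have meas: "measure lebesgue (\<Union>k<m. T k) = real m * measure lebesgue A"
  proof -
    have "measure lebesgue (\<Union>k<m. T k) = (\<Sum>k<m. measure lebesgue (T k))"
    proof (rule measure_finite_Union)
      show "emeasure lebesgue (T k) \<noteq> \<infinity>" for k
        using emeasure_eq_measure2[OF Tlm[of k]] by simp
    qed (use disj Tlm in \<open>auto intro: fmeasurableD\<close>)
    then show ?thesis by (simp add: Tmeas)
  qed
  have subU: "(\<Union>k<m. T k) \<subseteq> cball 0 2"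
  proof
    fix z assume "z \<in> (\<Union>k<m. T k)"
    then obtain k a where k: "k < m" and a: "a \<in> A" and z: "z = real k *\<^sub>R w + a"
      unfolding T_def by auto
    have "norm a \<le> 1" using a sub unfolding A_def by auto
    moreover have "real k * norm w \<le> y * norm w"
      using k my npos by (intro mult_right_mono) auto
    moreover have "y * norm w = 1" using npos by (simp add: y_def)
    ultimately have "norm z \<le> 2"
      unfolding z using norm_triangle_ineq[of "real k *\<^sub>R w" a] by simp
    then show "z \<in> cball 0 2" by simp
  qed
  have "measure lebesgue (\<Union>k<m. T k) \<le> measure lebesgue (cball (0::real^'d) 2)"
    by (intro measure_mono_fmeasurable subU) (auto intro: fmeasurableD sets.finite_UN Tlm)
  then have mA: "real m * measure lebesgue A \<le> measure lebesgue (cball (0::real^'d) 2)"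
    using meas by simp
  have "measure lebesgue A * (1 / (2 * norm w)) \<le> measure lebesgue A * real m"
    using my2 by (intro mult_left_mono) (auto simp: y_def)
  then have "measure lebesgue A \<le> 2 * norm w * (measure lebesgue A * real m)"
    using npos by (simp add: field_simps)
  also have "\<dots> \<le> 2 * norm w * measure lebesgue (cball (0::real^'d) 2)"
    using mA npos by (intro mult_left_mono) (auto simp: mult.commute)
  finally show ?thesis unfolding A_def .
qed



definition cv :: "real \<Rightarrow> 'd set \<Rightarrow> real^'d" where
  "cv \<delta> S = (\<chi> i. if i \<in> S then \<delta> else 0)"

lemma corner_gen:
  fixes \<Omega> :: "(real^'d) set"
  assumes cvx: "convex \<Omega>" and d: "\<delta> > 0" and T: "finite T"
  shows "\<forall>x. (\<forall>S\<subseteq>T. x + cv \<delta> S \<in> \<Omega>) \<longrightarrow>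
    (\<forall>u. (\<forall>i. 0 \<le> u$i \<and> u$i \<le> \<delta>) \<and> (\<forall>i. i \<notin> T \<longrightarrow> u$i = 0) \<longrightarrow> x + u \<in> \<Omega>)"
  using T
proof (induction T rule: finite_induct)
  case empty
  show ?case
  proof (intro allI impI)
    fix x :: "real^'d" and u :: "real^'d"
    assume c: "\<forall>S\<subseteq>{}. x + cv \<delta> S \<in> \<Omega>" and "(\<forall>i. 0 \<le> u$i \<and> u$i \<le> \<delta>) \<and> (\<forall>i. i \<notin> {} \<longrightarrow> u$i = 0)"
    then have "u = 0" by (simp add: vec_eq_iff)
    moreover have "cv \<delta> {} = 0" by (simp add: cv_def vec_eq_iff)
    ultimately show "x + u \<in> \<Omega>" using c by (metis add.right_neutral order_refl)
  qed
next
  case (insert j T)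
  show ?case
  proof (intro allI impI)
    fix x :: "real^'d" and u :: "real^'d"
    assume c: "\<forall>S\<subseteq>insert j T. x + cv \<delta> S \<in> \<Omega>"
      and u: "(\<forall>i. 0 \<le> u$i \<and> u$i \<le> \<delta>) \<and> (\<forall>i. i \<notin> insert j T \<longrightarrow> u$i = 0)"
    define u' where "u' = (\<chi> i. if i = j then 0 else u$i)"
    have u': "(\<forall>i. 0 \<le> u'$i \<and> u'$i \<le> \<delta>) \<and> (\<forall>i. i \<notin> T \<longrightarrow> u'$i = 0)"
      using u d by (auto simp: u'_def)
    have y0: "x + u' \<in> \<Omega>"
      using insert.IH c u' by blast
    define x1 where "x1 = x + cv \<delta> {j}"
    have c1: "\<forall>S\<subseteq>T. x1 + cv \<delta> S \<in> \<Omega>"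
    proof (intro allI impI)
      fix S assume S: "S \<subseteq> T"
      have "x1 + cv \<delta> S = x + cv \<delta> (insert j S)"
        using S insert.hyps(2) by (auto simp: x1_def cv_def vec_eq_iff)
      moreover have "insert j S \<subseteq> insert j T" using S by auto
      ultimately show "x1 + cv \<delta> S \<in> \<Omega>" using c by metis
    qed
    have y1: "x1 + u' \<in> \<Omega>"
      using insert.IH c1 u' by blast
    define l where "l = u$j / \<delta>"
    have l: "0 \<le> l" "l \<le> 1" using u d by (auto simp: l_def)
    have "(1 - l) *\<^sub>R (x + u') + l *\<^sub>R (x1 + u') \<in> \<Omega>"
      using convexD[OF cvx y0 y1, of "1 - l" l] l by auto
    moreover have "(1 - l) *\<^sub>R (x + u') + l *\<^sub>R (x1 + u') = x + u"
      using d by (auto simp: vec_eq_iff x1_def cv_def u'_def l_def algebra_simps)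
    ultimately show "x + u \<in> \<Omega>" by simp
  qed
qed

lemma corner:
  fixes \<Omega> :: "(real^'d) set"
  assumes cvx: "convex \<Omega>" and d: "\<delta> > 0" and c: "\<forall>S. x + cv \<delta> S \<in> \<Omega>"
    and u: "\<forall>i. 0 \<le> u$i \<and> u$i \<le> \<delta>"
  shows "x + u \<in> \<Omega>"
  using corner_gen[OF cvx d finite[of UNIV]] c u by blast

lemma norm_cv: "norm (cv \<delta> S :: real^'d) \<le> real CARD('d) * \<delta>" if "\<delta> \<ge> 0"
proof -
  have "norm (cv \<delta> S :: real^'d) \<le> (\<Sum>i\<in>UNIV. \<bar>(cv \<delta> S :: real^'d)$i\<bar>)" by (rule norm_le_l1_cart)
  also have "\<dots> \<le> (\<Sum>i\<in>(UNIV::'d set). \<delta>)" using that by (intro sum_mono) (auto simp: cv_def)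
  finally show ?thesis by simp
qed



lemma lattice_finite:
  assumes d: "\<delta> > 0" and sub: "\<Omega> \<subseteq> cball (0::real^'d) 1"
  shows "finite (scaled_lattice \<delta> \<inter> \<Omega>)"
proof -
  define M where "M = \<lceil>1/\<delta>\<rceil>"
  have "scaled_lattice \<delta> \<inter> \<Omega> \<subseteq> (\<lambda>k. \<chi> i. \<delta> * of_int (k i)) ` (PiE UNIV (\<lambda>_. {-M..M}))"
  proof
    fix p assume p: "p \<in> scaled_lattice \<delta> \<inter> \<Omega>"
    then have "\<forall>i. \<exists>k::int. p $ i = \<delta> * of_int k" by (simp add: scaled_lattice_def)
    then obtain k where k: "\<And>i. p $ i = \<delta> * of_int (k i)" by metis
    have np: "norm p \<le> 1" using p sub by auto
    have kb: "k i \<in> {-M..M}" for i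
    proof -
      have "\<bar>\<delta> * of_int (k i)\<bar> \<le> 1" using component_le_norm_cart[of p i] np k[of i] by simp
      then have "\<bar>of_int (k i)\<bar> \<le> 1/\<delta>" using d by (simp add: abs_mult field_simps)
      moreover have "1/\<delta> \<le> of_int M" unfolding M_def by simp
      ultimately have "\<bar>of_int (k i)\<bar> \<le> (of_int M :: real)" by linarith
      then show ?thesis by (simp add: abs_le_iff)
    qed
    have "p = (\<chi> i. \<delta> * of_int (k i))" by (simp add: vec_eq_iff k)
    moreover have "k \<in> PiE UNIV (\<lambda>_. {-M..M})" using kb by auto
    ultimately show "p \<in> (\<lambda>k. \<chi> i. \<delta> * of_int (k i)) ` (PiE UNIV (\<lambda>_. {-M..M}))" by blast
  qed
  moreover have "finite (PiE (UNIV::'d set) (\<lambda>_. {-M..M}))" by (intro finite_PiE) auto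
  ultimately show ?thesis by (meson finite_imageI finite_subset)
qed

lemma lattice_count:
  fixes \<Omega> :: "(real^'d) set"
  assumes cpt: "compact \<Omega>" and cvx: "convex \<Omega>" and sub: "\<Omega> \<subseteq> cball 0 1"
    and vol: "measure lborel \<Omega> \<ge> \<kappa>" and d: "0 < \<delta>"
    and d1: "real CARD('d) * \<delta> \<le> 1/2"
    and d2: "2^CARD('d) * (2 * (real CARD('d) * \<delta>) * measure lebesgue (cball (0::real^'d) 2)) \<le> \<kappa>/2"
  shows "\<kappa>/2 \<le> real (card (scaled_lattice \<delta> \<inter> \<Omega>)) * \<delta>^CARD('d)"
proof -
  define P where "P = scaled_lattice \<delta> \<inter> \<Omega>"
  define V where "V = measure lebesgue (cball (0::real^'d) 2)"
  have finP: "finite P" unfolding P_def by (rule lattice_finite[OF d sub])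
  have Olm: "\<Omega> \<in> lmeasurable" by (rule lmeasurable_compact[OF cpt])
  have "\<Omega> \<in> sets lborel" using compact_imp_closed[OF cpt] by simp
  then have vol': "measure lebesgue \<Omega> \<ge> \<kappa>" using vol by simp
  define A where "A S = {x\<in>\<Omega>. x + cv \<delta> S \<notin> \<Omega>}" for S
  have A_eq: "A S = \<Omega> - (\<lambda>y. y - cv \<delta> S) ` \<Omega>" for S
    unfolding A_def by (auto simp: image_iff) (metis add_diff_cancel)
  have Alm: "A S \<in> lmeasurable" for S
    unfolding A_eq by (intro fmeasurable_Diff lmeasurable_compact cpt fmeasurableD compact_translation_subtract)
  have Ab: "measure lebesgue (A S) \<le> 2 * (real CARD('d) * \<delta>) * V" for S
  proof -
    have n: "norm (cv \<delta> S :: real^'d) \<le> real CARD('d) * \<delta>" using d by (intro norm_cv) simp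
    have "measure lebesgue (A S) \<le> 2 * norm (cv \<delta> S :: real^'d) * V"
      unfolding A_def V_def using n d1 by (intro strip_bound cpt cvx sub) auto
    also have "\<dots> \<le> 2 * (real CARD('d) * \<delta>) * V"
      using n by (intro mult_right_mono) (auto simp: V_def)
    finally show ?thesis .
  qed
  define K where "K = \<Omega> - (\<Union>S\<in>Pow UNIV. A S)"
  have UA: "measure lebesgue (\<Union>S\<in>Pow (UNIV::'d set). A S) \<le> \<kappa>/2"
  proof -
    have "measure lebesgue (\<Union>S\<in>Pow (UNIV::'d set). A S) \<le> (\<Sum>S\<in>Pow (UNIV::'d set). measure lebesgue (A S))"
      by (intro measure_UNION_le) (auto intro: fmeasurableD Alm)
    also have "\<dots> \<le> (\<Sum>S\<in>Pow (UNIV::'d set). 2 * (real CARD('d) * \<delta>) * V)"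
      by (intro sum_mono Ab)
    also have "\<dots> = 2^CARD('d) * (2 * (real CARD('d) * \<delta>) * V)"
      by (simp add: card_Pow)
    finally show ?thesis using d2 unfolding V_def by linarith
  qed
  have UAlm: "(\<Union>S\<in>Pow (UNIV::'d set). A S) \<in> lmeasurable"
    by (intro fmeasurable.finite_UN) (auto intro: Alm)
  have Klm: "K \<in> lmeasurable" unfolding K_def by (intro fmeasurable_Diff Olm fmeasurableD UAlm)
  have "measure lebesgue \<Omega> \<le> measure lebesgue (K \<union> (\<Union>S\<in>Pow (UNIV::'d set). A S))"
  proof (rule measure_mono_fmeasurable)
    show "K \<union> (\<Union>S\<in>Pow (UNIV::'d set). A S) \<in> lmeasurable" by (intro fmeasurable.Un Klm UAlm)
  qed (auto simp: K_def intro: fmeasurableD Olm)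
  also have "\<dots> \<le> measure lebesgue K + measure lebesgue (\<Union>S\<in>Pow (UNIV::'d set). A S)"
    by (rule measure_Un_le[OF fmeasurableD[OF Klm] fmeasurableD[OF UAlm]])
  finally have Kb: "measure lebesgue K \<ge> \<kappa>/2" using vol' UA by linarith
  define B where "B p = cbox (\<chi> i. p$i - \<delta>) (p :: real^'d)" for p
  have KB: "K \<subseteq> (\<Union>p\<in>P. B p)"
  proof
    fix x assume x: "x \<in> K"
    then have c: "\<forall>S. x + cv \<delta> S \<in> \<Omega>" by (auto simp: K_def A_def)
    define p :: "real^'d" where "p = (\<chi> i. \<delta> * of_int \<lceil>x$i / \<delta>\<rceil>)"
    have bnd: "x$i \<le> p$i \<and> p$i \<le> x$i + \<delta>" for i
    proof -
      have "x$i / \<delta> \<le> of_int \<lceil>x$i / \<delta>\<rceil>" "of_int \<lceil>x$i / \<delta>\<rceil> \<le> x$i / \<delta> + 1" by linarith+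
      then have "\<delta> * (x$i / \<delta>) \<le> \<delta> * of_int \<lceil>x$i / \<delta>\<rceil>" "\<delta> * of_int \<lceil>x$i / \<delta>\<rceil> \<le> \<delta> * (x$i / \<delta> + 1)"
        using d by (intro mult_left_mono; simp)+
      then show ?thesis using d by (simp add: p_def algebra_simps)
    qed
    have "x + (p - x) \<in> \<Omega>"
    proof (intro corner[OF cvx d c] allI)
      fix i show "0 \<le> (p - x) $ i \<and> (p - x) $ i \<le> \<delta>" using bnd[of i] by simp
    qed
    then have "p \<in> \<Omega>" by simp
    moreover have "p \<in> scaled_lattice \<delta>" by (auto simp: scaled_lattice_def p_def)
    moreover have "x \<in> B p" using bnd by (auto simp: B_def mem_box_cart) (smt (verit) bnd)
    ultimately show "x \<in> (\<Union>p\<in>P. B p)" unfolding P_def by blast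
  qed
  have Blm: "B p \<in> lmeasurable" for p unfolding B_def by simp
  have Bm: "measure lebesgue (B p) = \<delta>^CARD('d)" for p
  proof -
    have "p \<in> B p" using d by (auto simp: B_def mem_box_cart)
    then have ne: "B p \<noteq> {}" by auto
    have "measure lebesgue (B p) = measure lborel (B p)" unfolding B_def by simp
    also have "\<dots> = (\<Prod>i\<in>UNIV. p$i - (p$i - \<delta>))" unfolding B_def using ne[unfolded B_def]
      by (subst content_cbox_cart) auto
    finally show ?thesis by simp
  qed
  have UBlm: "(\<Union>p\<in>P. B p) \<in> lmeasurable"
    by (intro fmeasurable.finite_UN finP) (auto intro: Blm)
  have "measure lebesgue K \<le> measure lebesgue (\<Union>p\<in>P. B p)"
    by (intro measure_mono_fmeasurable KB UBlm) (auto intro: fmeasurableD Klm)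
  also have "\<dots> \<le> (\<Sum>p\<in>P. measure lebesgue (B p))"
    by (intro measure_UNION_le finP) (auto intro: fmeasurableD Blm)
  also have "\<dots> = real (card P) * \<delta>^CARD('d)" by (simp add: Bm)
  finally show ?thesis using Kb unfolding P_def by linarith
qed



lemma sum_Pow_pow:
  fixes x :: real
  assumes "finite P"
  shows "(\<Sum>D\<in>Pow P. x^card D) = (1+x)^card P"
  using assms
proof (induction P rule: finite_induct)
  case empty then show ?case by simp
next
  case (insert a A)
  have disj: "Pow A \<inter> insert a ` Pow A = {}" using insert.hyps by auto
  have inj: "inj_on (insert a) (Pow A)" using insert.hyps unfolding inj_on_def by (metis PowD insert_ident subsetD)
  have "(\<Sum>D\<in>Pow (insert a A). x^card D) = (\<Sum>D\<in>Pow A. x^card D) + (\<Sum>D\<in>insert a ` Pow A. x^card D)"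
    unfolding Pow_insert using disj insert.hyps by (intro sum.union_disjoint) auto
  also have "(\<Sum>D\<in>insert a ` Pow A. x^card D) = (\<Sum>D\<in>Pow A. x^card (insert a D))"
    using inj by (simp add: sum.reindex)
  also have "\<dots> = (\<Sum>D\<in>Pow A. x * x^card D)"
  proof (intro sum.cong refl)
    fix D assume "D \<in> Pow A"
    then have "finite D" "a \<notin> D" using insert.hyps finite_subset by auto
    then show "x^card (insert a D) = x * x^card D" by simp
  qed
  finally show ?case using insert.IH insert.hyps by (simp add: sum_distrib_left[symmetric] algebra_simps)
qed

lemma small_count:
  assumes "finite P"
  shows "real (card {D\<in>Pow P. real (card D) \<le> real (card P) / 16})
          \<le> exp (real (card P) * (ln (5/4) + ln 4 / 16))"
proof -
  define n where "n = real (card P)"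
  define Sm where "Sm = {D\<in>Pow P. real (card D) \<le> n / 16}"
  have fin: "finite Sm" using assms by (simp add: Sm_def)
  have "real (card Sm) * exp (- (n/16) * ln 4) = (\<Sum>D\<in>Sm. exp (- (n/16) * ln 4))" by simp
  also have "\<dots> \<le> (\<Sum>D\<in>Sm. (1/4::real)^card D)"
  proof (intro sum_mono)
    fix D assume "D \<in> Sm"
    then have c: "real (card D) \<le> n/16" by (simp add: Sm_def)
    have e4: "exp (real (card D) * ln 4) = (4::real)^card D" by (simp add: exp_of_nat_mult)
    have "(1/4::real)^card D = exp (- real (card D) * ln 4)"
      by (simp add: exp_minus e4 power_one_over inverse_eq_divide)
    moreover have "exp (- (n/16) * ln 4) \<le> exp (- real (card D) * ln 4)"
      using c by simp
    ultimately show "exp (- (n/16) * ln 4) \<le> (1/4::real)^card D" by simp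
  qed
  also have "\<dots> \<le> (\<Sum>D\<in>Pow P. (1/4::real)^card D)"
    using assms by (intro sum_mono2) (auto simp: Sm_def)
  also have "\<dots> = (5/4)^card P" using sum_Pow_pow[OF assms, of "1/4"] by simp
  also have "\<dots> = exp (n * ln (5/4))" by (simp add: n_def exp_of_nat_mult)
  finally have "real (card Sm) \<le> exp (n * ln (5/4)) / exp (- (n/16) * ln 4)"
    by (simp add: field_simps)
  also have "\<dots> = exp (n * (ln (5/4) + ln 4 / 16))"
    by (simp add: exp_diff[symmetric] algebra_simps)
  finally show ?thesis by (simp add: Sm_def n_def)
qed



lemma ell_L2: "ell_Pn P f g = sqrt (1 / real (card P)) * L2_set (\<lambda>x. f x - g x) P"
  unfolding ell_Pn_def L2_set_def real_sqrt_mult[symmetric] by simp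

lemma ell_sym: "ell_Pn P f g = ell_Pn P g f"
  unfolding ell_Pn_def by (simp add: power2_commute)

lemma ell_tri: "ell_Pn P f h \<le> ell_Pn P f g + ell_Pn P g h"
proof -
  have "L2_set (\<lambda>x. f x - h x) P = L2_set (\<lambda>x. (f x - g x) + (g x - h x)) P" by simp
  also have "\<dots> \<le> L2_set (\<lambda>x. f x - g x) P + L2_set (\<lambda>x. g x - h x) P"
    by (rule L2_set_triangle_ineq)
  finally have "sqrt (1 / real (card P)) * L2_set (\<lambda>x. f x - h x) P
     \<le> sqrt (1 / real (card P)) * (L2_set (\<lambda>x. f x - g x) P + L2_set (\<lambda>x. g x - h x) P)"
    by (intro mult_left_mono) auto
  then show ?thesis unfolding ell_L2 by (simp add: algebra_simps)
qed

lemma convex_on_Max_affine: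
  fixes a :: "'i \<Rightarrow> real^'d" and b :: "'i \<Rightarrow> real"
  assumes "finite P" "P \<noteq> {}" "convex \<Omega>"
  shows "convex_on \<Omega> (\<lambda>x. Max ((\<lambda>p. a p \<bullet> x + b p) ` P))"
proof (rule convex_onI[OF _ assms(3)])
  fix t :: real and x y :: "real^'d" assume t: "0 < t" "t < 1"
  let ?M = "\<lambda>x. Max ((\<lambda>p. a p \<bullet> x + b p) ` P)"
  show "?M ((1 - t) *\<^sub>R x + t *\<^sub>R y) \<le> (1 - t) * ?M x + t * ?M y"
  proof -
  have "\<forall>p\<in>P. a p \<bullet> ((1 - t) *\<^sub>R x + t *\<^sub>R y) + b p \<le> (1 - t) * ?M x + t * ?M y"
  proof
    fix p assume p: "p \<in> P"
    have "a p \<bullet> x + b p \<le> ?M x" "a p \<bullet> y + b p \<le> ?M y" using p assms by auto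
    then have "(1 - t) * (a p \<bullet> x + b p) + t * (a p \<bullet> y + b p) \<le> (1 - t) * ?M x + t * ?M y"
      using t by (intro add_mono mult_left_mono) auto
    then show "a p \<bullet> ((1 - t) *\<^sub>R x + t *\<^sub>R y) + b p \<le> (1 - t) * ?M x + t * ?M y"
      by (simp add: inner_add_right algebra_simps)
  qed
  then show ?thesis using assms by (subst Max_le_iff) auto
  qed
qed

lemma lattice_sep:
  assumes "p \<in> scaled_lattice \<delta>" "q \<in> scaled_lattice \<delta>" "p \<noteq> q" "\<delta> > 0"
  shows "\<delta>^2 \<le> norm (p - q :: real^'d)^2"
proof -
  obtain i where i: "p$i \<noteq> q$i" using assms(3) by (auto simp: vec_eq_iff)
  obtain k where k: "p$i = \<delta> * of_int k" using assms(1) by (auto simp: scaled_lattice_def)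
  obtain l where l: "q$i = \<delta> * of_int l" using assms(2) by (auto simp: scaled_lattice_def)
  have "k \<noteq> l" using i k l by auto
  then have "(1::int) \<le> \<bar>k - l\<bar>" by linarith
  then have "1 \<le> \<bar>of_int k - of_int l :: real\<bar>" by (metis of_int_1_le_iff of_int_abs of_int_diff)
  then have "\<delta> \<le> \<bar>p$i - q$i\<bar>" using assms(4) k l
    by (simp add: abs_mult right_diff_distrib[symmetric])
  also have "\<dots> \<le> norm (p - q)" using component_le_norm_cart[of "p - q" i] by simp
  finally show ?thesis using assms(4) by (intro power_mono) auto
qed



lemma ell_cong: "(\<And>x. x \<in> P \<Longrightarrow> f x = f' x) \<Longrightarrow> ell_Pn P f g = ell_Pn P f' g"
  unfolding ell_Pn_def by (simp cong: sum.cong)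

lemma cover_lower:
  fixes P :: "(real^'d) set" and \<Omega> :: "(real^'d) set"
  assumes finP: "finite P" and ne: "P \<noteq> {}" and d: "\<delta> > 0" and lat: "P \<subseteq> scaled_lattice \<delta>"
    and h: "0 < h" "h \<le> \<delta>^2" "h \<le> t" and eps: "\<epsilon> \<le> h/8" and cvx: "convex \<Omega>"
  shows "ereal (real (card P) / 8) \<le> log_covering_number \<epsilon>
            (emp_ball (ell_Pn P) (convex_class \<Omega>) (\<lambda>x. (norm x)^2) t) (ell_Pn P)"
proof -
  define n where "n = real (card P)"
  have npos: "n > 0" using finP ne by (simp add: n_def card_gt_0_iff)
  define f0 :: "real^'d \<Rightarrow> real" where "f0 = (\<lambda>x. (norm x)^2)"
  define g where "g S = (\<lambda>x::real^'d. Max ((\<lambda>p. (2 *\<^sub>R p) \<bullet> x + (- ((norm p)^2) - (if p \<in> S then h else 0))) ` P))" for S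
  define Ball where "Ball = emp_ball (ell_Pn P) (convex_class \<Omega>) f0 t"
  have gconv: "convex_on \<Omega> (g S)" for S
    unfolding g_def by (rule convex_on_Max_affine[OF finP ne cvx])
  have gval: "g S q = (norm q)^2 - (if q \<in> S then h else 0)" if q: "q \<in> P" for S q
    unfolding g_def
  proof (rule Max_eqI)
    show "finite ((\<lambda>p. (2 *\<^sub>R p) \<bullet> q + (- ((norm p)^2) - (if p \<in> S then h else 0))) ` P)" using finP by simp
    show "(norm q)^2 - (if q \<in> S then h else 0) \<in> (\<lambda>p. (2 *\<^sub>R p) \<bullet> q + (- ((norm p)^2) - (if p \<in> S then h else 0))) ` P"
      using q by (intro image_eqI[of _ _ q]) (auto simp: power2_norm_eq_inner)
    fix y assume "y \<in> (\<lambda>p. (2 *\<^sub>R p) \<bullet> q + (- ((norm p)^2) - (if p \<in> S then h else 0))) ` P"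
    then obtain p where p: "p \<in> P" and y: "y = (2 *\<^sub>R p) \<bullet> q + (- ((norm p)^2) - (if p \<in> S then h else 0))" by auto
    show "y \<le> (norm q)^2 - (if q \<in> S then h else 0)"
    proof (cases "p = q")
      case True then show ?thesis using y by (simp add: power2_norm_eq_inner)
    next
      case False
      have sep: "\<delta>^2 \<le> norm (p - q)^2" using lattice_sep[OF _ _ False d] p q lat by auto
      have id: "norm (p - q)^2 = (norm p)^2 - 2 * (p \<bullet> q) + (norm q)^2"
        by (simp add: power2_norm_eq_inner inner_diff_left inner_diff_right inner_commute)
      show ?thesis using y sep id h by (auto split: if_splits)
    qed
  qed
  define E where "E S T = (S - T) \<union> (T - S)" for S T :: "(real^'d) set"
  have ellg: "ell_Pn P (g S) (g T) = h * sqrt (real (card (E S T \<inter> P)) / n)" for S T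
  proof -
    have "(\<Sum>x\<in>P. (g S x - g T x)^2) = (\<Sum>x\<in>P. if x \<in> E S T then h^2 else 0)"
      by (intro sum.cong refl) (auto simp: gval E_def)
    also have "\<dots> = (\<Sum>x\<in>P \<inter> E S T. h^2)" by (rule sum.inter_restrict[OF finP, symmetric])
    also have "\<dots> = real (card (E S T \<inter> P)) * h^2" by (simp add: Int_commute)
    finally have "ell_Pn P (g S) (g T) = sqrt (h^2 * (real (card (E S T \<inter> P)) / n))"
      unfolding ell_Pn_def n_def by (simp add: field_simps)
    also have "\<dots> = h * sqrt (real (card (E S T \<inter> P)) / n)"
      using h by (simp only: real_sqrt_mult real_sqrt_abs abs_of_pos)
    finally show ?thesis .
  qed
  have inball: "g S \<in> Ball" if S: "S \<subseteq> P" for S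
  proof -
    have "ell_Pn P f0 (g S) = ell_Pn P (g {}) (g S)"
      by (intro ell_cong) (simp add: gval f0_def)
    also have "\<dots> = h * sqrt (real (card (E {} S \<inter> P)) / n)" by (rule ellg)
    also have "\<dots> \<le> h * 1"
    proof (intro mult_left_mono)
      have "card (E {} S \<inter> P) \<le> card P" using finP by (intro card_mono) auto
      then show "sqrt (real (card (E {} S \<inter> P)) / n) \<le> 1" using npos by (simp add: n_def)
    qed (use h in auto)
    finally show ?thesis using h gconv
      by (simp add: Ball_def emp_ball_def convex_class_def)
  qed
  define Small where "Small = {D\<in>Pow P. real (card D) \<le> n / 16}"
  have Smallb: "real (card Small) \<le> exp (n * (ln (5/4) + ln 4 / 16))"
    using small_count[OF finP] by (simp add: Small_def n_def)
  have main: "exp (n/8) \<le> real (card C)"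
    if C: "finite C" "Ball \<subseteq> (\<Union>c\<in>C. {f. ell_Pn P c f \<le> \<epsilon>})" for C
  proof -
    define F where "F c = {S\<in>Pow P. ell_Pn P c (g S) \<le> \<epsilon>}" for c
    have cov: "Pow P \<subseteq> (\<Union>c\<in>C. F c)"
    proof
      fix S assume "S \<in> Pow P"
      then have "S \<subseteq> P" by simp
      then have "g S \<in> Ball" by (rule inball)
      then obtain c where "c \<in> C" "ell_Pn P c (g S) \<le> \<epsilon>" using C by blast
      then show "S \<in> (\<Union>c\<in>C. F c)" using \<open>S \<subseteq> P\<close> by (auto simp: F_def)
    qed
    have Fb: "card (F c) \<le> card Small" for c
    proof (cases "F c = {}")
      case True then show ?thesis by simp
    next
      case False
      then obtain S0 where S0: "S0 \<in> F c" by auto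
      show ?thesis
      proof (rule card_inj_on_le)
        show "inj_on (E S0) (F c)" unfolding inj_on_def E_def by blast
        show "finite Small" using finP by (simp add: Small_def)
        show "E S0 ` F c \<subseteq> Small"
        proof
          fix D assume "D \<in> E S0 ` F c"
          then obtain S where S: "S \<in> F c" and D: "D = E S0 S" by auto
          have DP: "D \<subseteq> P" using S S0 by (auto simp: D E_def F_def)
          have "ell_Pn P (g S0) (g S) \<le> ell_Pn P (g S0) c + ell_Pn P c (g S)" by (rule ell_tri)
          also have "\<dots> = ell_Pn P c (g S0) + ell_Pn P c (g S)" by (simp add: ell_sym)
          also have "\<dots> \<le> h/4" using S S0 eps by (auto simp: F_def)
          finally have "h * sqrt (real (card D) / n) \<le> h * (1/4)"
            using ellg[of S0 S] DP by (simp add: D Int_absorb2)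
          then have "sqrt (real (card D) / n) \<le> 1/4" using h by (simp add: mult_le_cancel_left_pos)
          then have "real (card D) / n \<le> (1/4)^2"
            by (metis real_sqrt_le_iff real_sqrt_pow2 real_sqrt_ge_zero divide_nonneg_nonneg of_nat_0_le_iff npos less_imp_le power_mono)
          then have "real (card D) \<le> n/16" using npos by (simp add: field_simps)
          then show "D \<in> Small" using DP by (simp add: Small_def)
        qed
      qed
    qed
    have "(2::real)^card P = real (card (Pow P))" using finP by (simp add: card_Pow)
    also have "\<dots> \<le> real (card (\<Union>c\<in>C. F c))"
      using cov C(1) finP by (intro of_nat_mono card_mono) (auto simp: F_def)
    also have "\<dots> \<le> real (\<Sum>c\<in>C. card (F c))"
      by (intro of_nat_mono card_UN_le C(1))
    also have "\<dots> \<le> real (card C * card Small)"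
      by (intro of_nat_mono) (metis Fb sum_bounded_above of_nat_id)
    also have "\<dots> \<le> real (card C) * exp (n * (ln (5/4) + ln 4 / 16))"
      using Smallb by (simp add: mult_left_mono)
    finally have A: "exp (n * ln 2) \<le> real (card C) * exp (n * (ln (5/4) + ln 4 / 16))"
      by (simp add: n_def exp_of_nat_mult)
    have l4: "ln (4::real) = 2 * ln 2"
      using ln_mult[of 2 2] by simp
    have l54: "ln (5/4::real) \<le> 1/4" using ln_le_minus_one[of "5/4"] by simp
    have l2: "2/3 \<le> ln (2::real)" by (rule ln2_ge_two_thirds)
    have "n/8 + n * (ln (5/4) + ln 4 / 16) \<le> n * ln 2"
    proof -
      have "1/8 + (ln (5/4) + ln 4 / 16) \<le> ln (2::real)" using l4 l54 l2 by linarith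
      then have "n * (1/8 + (ln (5/4) + ln 4 / 16)) \<le> n * ln 2" using npos by (intro mult_left_mono) auto
      then show ?thesis by (simp add: algebra_simps)
    qed
    then have "exp (n/8) * exp (n * (ln (5/4) + ln 4 / 16)) \<le> exp (n * ln 2)"
      by (simp add: exp_add[symmetric])
    then have "exp (n/8) * exp (n * (ln (5/4) + ln 4 / 16)) \<le> real (card C) * exp (n * (ln (5/4) + ln 4 / 16))"
      using A by linarith
    then show ?thesis by simp
  qed
  define Cov where "Cov = {enat (card C) |C. finite C \<and> Ball \<subseteq> (\<Union>c\<in>C. {f. ell_Pn P c f \<le> \<epsilon>})}"
  have cn: "covering_number \<epsilon> Ball (ell_Pn P) = Inf Cov"
    unfolding covering_number_def Cov_def by simp
  show ?thesis
  proof (cases "Cov = {}")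
    case True
    then have "covering_number \<epsilon> Ball (ell_Pn P) = \<infinity>" using cn by (simp add: Inf_enat_def)
    then show ?thesis by (simp add: log_covering_number_def Ball_def f0_def)
  next
    case False
    then have "Inf Cov \<in> Cov" unfolding Inf_enat_def using False by (auto intro: LeastI)
    then obtain C where C: "finite C" "Ball \<subseteq> (\<Union>c\<in>C. {f. ell_Pn P c f \<le> \<epsilon>})"
      and eq: "Inf Cov = enat (card C)" unfolding Cov_def by auto
    have "exp (n/8) \<le> real (card C)" by (rule main[OF C])
    then have "ln (exp (n/8)) \<le> ln (real (card C))" by (intro ln_mono) auto
    then have "n/8 \<le> ln (real (card C))" by simp
    then show ?thesis using cn eq
      by (simp add: log_covering_number_def Ball_def f0_def n_def)
  qed
qed



theorem lemma7p3:
  fixes \<kappa> :: real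
  assumes "\<kappa> > 0"
  shows "\<exists>c1>0. \<exists>c2>0. \<exists>\<delta>0>0. \<forall>(\<Omega>::(real^'d) set) \<delta>.
     compact \<Omega> \<and> convex \<Omega> \<and> interior \<Omega> \<noteq> {} \<and> \<Omega> \<subseteq> cball 0 1 \<and>
     measure lborel \<Omega> \<ge> \<kappa> \<and> 0 < \<delta> \<and> \<delta> \<le> \<delta>0 \<longrightarrow>
     (let P = scaled_lattice \<delta> \<inter> \<Omega>; n = real (card P); f0 = (\<lambda>x. (norm x)^2) in
      \<forall>t. t \<ge> c2 * n powr (-2 / real CARD('d)) \<longrightarrow>
        log_covering_number (c1 * n powr (-2 / real CARD('d)))
           (emp_ball (ell_Pn P) (convex_class \<Omega>) f0 t) (ell_Pn P) \<ge> ereal (n / 8))"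
proof -
  define D where "D = real CARD('d)"
  define V where "V = measure lebesgue (cball (0::real^'d) 2)"
  have Dpos: "D > 0" by (simp add: D_def)
  have V0: "V \<ge> 0" by (simp add: V_def)
  define \<delta>0 where "\<delta>0 = min (1/(2*D)) (\<kappa> / (4 * 2^CARD('d) * D * (V+1)))"
  define c1 where "c1 = min (1/8) ((\<kappa>/2) powr (2/D) / 8)"
  have \<delta>0pos: "\<delta>0 > 0" using Dpos V0 assms by (simp add: \<delta>0_def)
  have c1pos: "c1 > 0" using assms by (simp add: c1_def)
  show ?thesis
  proof (rule exI[of _ c1], rule conjI[OF c1pos], rule exI[of _ "1::real"], rule conjI[OF zero_less_one],
      rule exI[of _ \<delta>0], rule conjI[OF \<delta>0pos], intro allI impI)
    fix \<Omega> :: "(real^'d) set" and \<delta> :: real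
    assume H: "compact \<Omega> \<and> convex \<Omega> \<and> interior \<Omega> \<noteq> {} \<and> \<Omega> \<subseteq> cball 0 1 \<and>
       measure lborel \<Omega> \<ge> \<kappa> \<and> 0 < \<delta> \<and> \<delta> \<le> \<delta>0"
    then have cpt: "compact \<Omega>" and cvx: "convex \<Omega>" and sub: "\<Omega> \<subseteq> cball 0 1"
      and vol: "measure lborel \<Omega> \<ge> \<kappa>" and d: "0 < \<delta>" and dd: "\<delta> \<le> \<delta>0" by auto
    define P where "P = scaled_lattice \<delta> \<inter> \<Omega>"
    define n where "n = real (card P)"
    have d1: "real CARD('d) * \<delta> \<le> 1/2"
    proof -
      have "\<delta> \<le> 1/(2*D)" using dd by (simp add: \<delta>0_def)
      then show ?thesis using Dpos by (simp add: D_def field_simps)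
    qed
    have d2: "2^CARD('d) * (2 * (real CARD('d) * \<delta>) * V) \<le> \<kappa>/2"
    proof -
      define Q where "Q = 2^CARD('d) * D * \<delta>"
      have Q0: "Q \<ge> 0" using d Dpos by (simp add: Q_def)
      have "\<delta> \<le> \<kappa> / (4 * 2^CARD('d) * D * (V+1))" using dd by (simp add: \<delta>0_def)
      moreover have "(4 * 2^CARD('d) * D * (V+1)) > 0" using Dpos V0 by simp
      ultimately have "\<delta> * (4 * 2^CARD('d) * D * (V+1)) \<le> \<kappa>" by (simp add: pos_le_divide_eq)
      then have k: "4 * (Q * (V+1)) \<le> \<kappa>" by (simp add: Q_def algebra_simps)
      have "Q * V \<le> Q * (V+1)" using Q0 by (intro mult_left_mono) auto
      then have "2^CARD('d) * (2 * (real CARD('d) * \<delta>) * V) = 2 * (Q * V)" by (simp add: Q_def D_def algebra_simps)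
      then show ?thesis using \<open>Q * V \<le> Q * (V+1)\<close> k by linarith
    qed
    have cnt: "\<kappa>/2 \<le> n * \<delta>^CARD('d)"
      unfolding n_def P_def using lattice_count[OF cpt cvx sub vol d d1 d2[unfolded V_def]] .
    have finP: "finite P" unfolding P_def by (rule lattice_finite[OF d sub])
    have npos: "n > 0"
    proof -
      have "0 < n * \<delta>^CARD('d)" using cnt assms by linarith
      then show ?thesis using d by (simp add: zero_less_mult_iff)
    qed
    have neP: "P \<noteq> {}" using npos by (auto simp: n_def)
    have key: "(\<kappa>/2) powr (2/D) * n powr (-2/D) \<le> \<delta>^2"
    proof -
      have "(\<kappa>/2) powr (2/D) \<le> (n * \<delta>^CARD('d)) powr (2/D)"
        using cnt assms Dpos by (intro powr_mono2) auto
      also have "\<dots> = n powr (2/D) * (\<delta>^CARD('d)) powr (2/D)"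
        using npos d by (intro powr_mult)
      also have "\<delta>^CARD('d) = \<delta> powr D"
        unfolding D_def using d by (rule powr_realpow[symmetric])
      also have "(\<delta> powr D) powr (2/D) = \<delta> powr (D * (2/D))" by (rule powr_powr)
      also have "D * (2/D) = 2" using Dpos by simp
      also have "\<delta> powr 2 = \<delta>^2" using d by simp
      finally have "(\<kappa>/2) powr (2/D) \<le> n powr (2/D) * \<delta>^2" .
      then have "(\<kappa>/2) powr (2/D) * n powr (-2/D) \<le> n powr (2/D) * \<delta>^2 * n powr (-2/D)"
        by (intro mult_right_mono) auto
      also have "n powr (2/D) * n powr (-2/D) = 1"
        using npos by (simp add: powr_add[symmetric])
      then have "n powr (2/D) * \<delta>^2 * n powr (-2/D) = \<delta>^2"
        by (metis mult.commute mult.left_commute mult_1_right)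
      finally show ?thesis .
    qed
    show "let P = scaled_lattice \<delta> \<inter> \<Omega>; n = real (card P); f0 = (\<lambda>x. (norm x)^2) in
      \<forall>t. t \<ge> 1 * n powr (-2 / real CARD('d)) \<longrightarrow>
        log_covering_number (c1 * n powr (-2 / real CARD('d)))
           (emp_ball (ell_Pn P) (convex_class \<Omega>) f0 t) (ell_Pn P) \<ge> ereal (n / 8)"
      unfolding Let_def P_def[symmetric] n_def[symmetric] D_def[symmetric]
    proof (intro allI impI)
      fix t assume t: "1 * n powr (-2/D) \<le> t"
      define h where "h = min t (\<delta>^2)"
      have np: "n powr (-2/D) > 0" using npos by simp
      have "t > 0" using t np by linarith
      then have hpos: "h > 0" using d by (simp add: h_def)
      have eps: "c1 * n powr (-2/D) \<le> h/8"
      proof -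
        have "c1 * n powr (-2/D) \<le> (1/8) * n powr (-2/D)"
          using np by (intro mult_right_mono) (auto simp: c1_def)
        then have e1: "c1 * n powr (-2/D) \<le> t/8" using t by simp
        have "c1 * n powr (-2/D) \<le> ((\<kappa>/2) powr (2/D) / 8) * n powr (-2/D)"
          using np by (intro mult_right_mono) (auto simp: c1_def)
        then have e2: "c1 * n powr (-2/D) \<le> \<delta>^2/8" using key by simp
        show ?thesis using e1 e2 by (simp add: h_def)
      qed
      have "ereal (real (card P) / 8) \<le> log_covering_number (c1 * n powr (-2/D))
            (emp_ball (ell_Pn P) (convex_class \<Omega>) (\<lambda>x. (norm x)^2) t) (ell_Pn P)"
        by (rule cover_lower[OF finP neP d _ hpos _ _ eps cvx]) (auto simp: P_def h_def)
      then show "ereal (n / 8) \<le> log_covering_number (c1 * n powr (-2/D))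
            (emp_ball (ell_Pn P) (convex_class \<Omega>) (\<lambda>x. (norm x)^2) t) (ell_Pn P)"
        by (simp add: n_def)
    qed
  qed
qed



end
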